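(* Let $L>0$ and let $\rho:[0,L]\to\mathbb{R}_{>0}$ be a fixed (time-independent) normalized density, $\int_0^L\rho=1$, for which there are constants $0<d_l\le d_u<\infty$ with $d_l\le \rho(x)\le d_u$ on $[0,L]$ (and such that $\partial_x\rho$ is bounded, with $0<D_l\le\partial_x\rho\le D_u<\infty$ on $(0,L)$). Let $\Theta(x)=\int_0^x\rho(\bar x)\,d\bar x$. Consider the system $$\partial_t X=\frac{1}{\rho}\,\partial_x\!\left(\frac{\partial_x X}{\rho}\right)\ \text{on } (0,L),\qquad X(t,0)=\alpha(t),\quad X(t,L)=\beta(t),\quad X(0,x)=X_0(x),$$ $$\dot\alpha(t)=-\alpha(t),\qquad \dot\beta(t)=1-\beta(t).$$ Assume that this system is well posed, that its solution is sufficiently smooth (at least $C^2$ in the spatial variable, also as $t\to\infty$), and that $X(t,\cdot)$ belongs to the Sobolev space $H^1((0,L))$. Then for every $C^2$ initial condition $X_0$, the solution $X(t,x)$ converges pointwise to $\Theta(x)$ as $t\to\infty$, for all $x\in(0,L)$.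
   Context: $H^1((0,L))=W^{1,2}((0,L))$ denotes the Sobolev space of square-integrable functions with square-integrable weak derivative. The variable $X$ is a "pseudo-coordinate" of the agents of a stationary one-dimensional swarm with density $\rho$, and $\alpha,\beta$ are boundary inputs whose initial values are the boundary values of $X_0$. *)

theory Defs
  imports "HOL-Analysis.Analysis"
begin

definition C2_on :: "real set \<Rightarrow> (real \<Rightarrow> real) \<Rightarrow> bool" where
  "C2_on S f \<longleftrightarrow> (\<exists>f' f''.
      (\<forall>x\<in>S. (f has_real_derivative f' x) (at x within S)) \<and>
      (\<forall>x\<in>S. (f' has_real_derivative f'' x) (at x within S)) \<and>
      continuous_on S f'')"

definition Theta :: "(real \<Rightarrow> real) \<Rightarrow> real \<Rightarrow> real" where
  "Theta \<rho> x = integral {0..x} \<rho>"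

end

theory Submission
  imports Defs
begin


lemma C2_cont: "C2_on S f \<Longrightarrow> continuous_on S f"
  unfolding C2_on_def continuous_on_eq_continuous_within
  using DERIV_continuous by blast

lemma maxp:
  fixes u :: "real \<Rightarrow> real \<Rightarrow> real" and T L :: real
  assumes cont: "continuous_on ({0..T}\<times>{0..L}) (\<lambda>p. u (fst p) (snd p))"
    and T: "T \<ge> 0" and L: "L \<ge> 0"
    and init: "\<forall>x\<in>{0..L}. u 0 x \<le> 0"
    and left: "\<forall>t\<in>{0..T}. u t 0 \<le> 0"
    and right: "\<forall>t\<in>{0..T}. u t L \<le> 0"
    and H: "\<And>t x. 0<t \<Longrightarrow> t \<le> T \<Longrightarrow> 0<x \<Longrightarrow> x<L \<Longrightarrow> (\<forall>y\<in>{0..L}. u t y \<le> u t x)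
             \<Longrightarrow> (\<forall>s\<in>{0..t}. u s x \<le> u t x) \<Longrightarrow> False"
  shows "\<forall>t\<in>{0..T}. \<forall>x\<in>{0..L}. u t x \<le> 0"
proof -
  have "compact ({0..T}\<times>{0..L::real})" by (intro compact_Times compact_Icc)
  moreover have "({0..T}\<times>{0..L::real}) \<noteq> {}" using T L by auto
  ultimately obtain p where p: "p \<in> {0..T}\<times>{0..L}"
    and pm: "\<forall>q\<in>{0..T}\<times>{0..L}. u (fst q) (snd q) \<le> u (fst p) (snd p)"
    using continuous_attains_sup[OF _ _ cont] by blast
  obtain t0 x0 where px: "p = (t0, x0)" by (cases p)
  have mx: "\<forall>t\<in>{0..T}. \<forall>x\<in>{0..L}. u t x \<le> u t0 x0" using pm px by force
  show ?thesis
  proof (cases "u t0 x0 \<le> 0")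
    case True then show ?thesis using mx by force
  next
    case False
    have t0: "0 \<le> t0" "t0 \<le> T" and x0: "0 \<le> x0" "x0 \<le> L" using p px by auto
    have "t0 \<noteq> 0" using False init x0 by auto
    moreover have "x0 \<noteq> 0" using False left t0 by auto
    moreover have "x0 \<noteq> L" using False right t0 by auto
    ultimately show ?thesis
      using H[of t0 x0] t0 x0 mx by auto
  qed
qed


theorem mainTheorem2:
  fixes L d_l d_u D_l D_u :: real
    and \<rho> \<rho>' :: "real \<Rightarrow> real"
    and X0 \<alpha> \<beta> :: "real \<Rightarrow> real"
    and X :: "real \<Rightarrow> real \<Rightarrow> real"
  assumes L_pos: "L > 0"
    and rho_cont: "continuous_on {0..L} \<rho>"
    and rho_int: "(\<rho> has_integral 1) {0..L}"
    and d_bounds: "0 < d_l" "d_l \<le> d_u"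
    and rho_bounds: "\<forall>x\<in>{0..L}. d_l \<le> \<rho> x \<and> \<rho> x \<le> d_u"
    and D_bounds: "0 < D_l" "D_l \<le> D_u"
    and rho_deriv: "\<forall>x\<in>{0<..<L}. (\<rho> has_real_derivative \<rho>' x) (at x)"
    and rho'_bounds: "\<forall>x\<in>{0<..<L}. D_l \<le> \<rho>' x \<and> \<rho>' x \<le> D_u"
    \<comment> \<open>C^2 initial condition\<close>
    and X0_C2: "C2_on {0..L} X0"
    \<comment> \<open>boundary inputs\<close>
    and alpha_ode: "\<forall>t\<ge>0. (\<alpha> has_real_derivative (- \<alpha> t)) (at t within {0..})"
    and beta_ode: "\<forall>t\<ge>0. (\<beta> has_real_derivative (1 - \<beta> t)) (at t within {0..})"
    and alpha_init: "\<alpha> 0 = X0 0"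
    and beta_init: "\<beta> 0 = X0 L"
    \<comment> \<open>regularity of the (classical) solution\<close>
    and X_cont: "continuous_on ({0..} \<times> {0..L}) (\<lambda>(t, x). X t x)"
    and X_C2: "\<forall>t\<ge>0. C2_on {0..L} (\<lambda>x. X t x)"
    and X_time_diff: "\<forall>t>0. \<forall>x\<in>{0<..<L}. (\<lambda>s. X s x) differentiable (at t)"
    \<comment> \<open>the PDE\<close>
    and X_pde: "\<forall>t>0. \<forall>x\<in>{0<..<L}.
        ((\<lambda>s. X s x) has_real_derivative
           (1 / \<rho> x) * deriv (\<lambda>y. deriv (\<lambda>z. X t z) y / \<rho> y) x) (at t)"
    \<comment> \<open>boundary and initial conditions\<close>
    and X_left: "\<forall>t\<ge>0. X t 0 = \<alpha> t"
    and X_right: "\<forall>t\<ge>0. X t L = \<beta> t"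
    and X_init: "\<forall>x\<in>{0..L}. X 0 x = X0 x"
  shows "\<forall>x\<in>{0<..<L}. ((\<lambda>t. X t x) \<longlongrightarrow> Theta \<rho> x) at_top"
proof -
  have rpos: "\<And>y. y \<in> {0..L} \<Longrightarrow> \<rho> y > 0" using rho_bounds d_bounds by force
  define Th where "Th = Theta \<rho>"
  have Th_eq: "Th = (\<lambda>x. integral {0..x} \<rho>)" unfolding Th_def by (rule ext) (simp add: Theta_def)
  have Th_derw: "\<And>y. y \<in> {0..L} \<Longrightarrow> (Th has_real_derivative \<rho> y) (at y within {0..L})"
    unfolding Th_eq by (rule integral_has_real_derivative[OF rho_cont])
  have Th_der: "\<And>y. y \<in> {0<..<L} \<Longrightarrow> (Th has_real_derivative \<rho> y) (at y)"
  proof -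
    fix y assume y: "y \<in> {0<..<L}"
    have "(Th has_real_derivative \<rho> y) (at y within {0..L})" using y by (intro Th_derw) auto
    moreover have "at y within {0..L} = at y" using y by (intro at_within_interior) simp
    ultimately show "(Th has_real_derivative \<rho> y) (at y)" by simp
  qed
  have Th_cont: "continuous_on {0..L} Th"
    unfolding continuous_on_eq_continuous_within using Th_derw DERIV_continuous by blast
  have Th0: "Th 0 = 0" unfolding Th_eq by simp
  have ThL: "Th L = 1" unfolding Th_eq using rho_int by (simp add: integral_unique)
  have Th_ge: "\<And>y. y \<in> {0..L} \<Longrightarrow> 0 \<le> Th y"
  proof -
    fix y assume y: "y \<in> {0..L}"
    have "\<rho> integrable_on {0..y}"
      using y by (intro integrable_continuous_real continuous_on_subset[OF rho_cont]) auto
    then show "0 \<le> Th y" unfolding Th_eq using y rpos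
      by (intro integral_nonneg) (auto intro: less_imp_le)
  qed
  have Th_le: "\<And>y. y \<in> {0..L} \<Longrightarrow> Th y \<le> 1"
  proof -
    fix y assume y: "y \<in> {0..L}"
    have "\<rho> integrable_on {0..y}"
      using y by (intro integrable_continuous_real continuous_on_subset[OF rho_cont]) auto
    moreover have "\<rho> integrable_on {0..L}" using rho_int by blast
    ultimately have "integral {0..y} \<rho> \<le> integral {0..L} \<rho>" using y rpos
      by (intro integral_subset_le) (auto intro: less_imp_le)
    then show "Th y \<le> 1" using ThL unfolding Th_eq by simp
  qed
  have alpha_sol: "\<And>s. s \<ge> 0 \<Longrightarrow> \<alpha> s = \<alpha> 0 * exp (- s)"
  proof -
    have "\<exists>c. \<forall>s\<in>{0::real..}. \<alpha> s * exp s = c"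
    proof (rule has_field_derivative_zero_constant)
      fix s :: real assume "s \<in> {0..}"
      then have "(\<alpha> has_real_derivative (- \<alpha> s)) (at s within {0..})" using alpha_ode by auto
      then have "((\<lambda>s. \<alpha> s * exp s) has_real_derivative (- \<alpha> s) * exp s + \<alpha> s * exp s) (at s within {0..})"
        by (auto intro!: derivative_eq_intros)
      then show "((\<lambda>s. \<alpha> s * exp s) has_real_derivative 0) (at s within {0..})" by simp
    qed simp
    then obtain c where c: "\<forall>s\<in>{0::real..}. \<alpha> s * exp s = c" by blast
    fix s :: real assume "s \<ge> 0"
    then have "\<alpha> s * exp s = \<alpha> 0 * exp 0" using c[rule_format, of s] c[rule_format, of 0] by auto
    then show "\<alpha> s = \<alpha> 0 * exp (- s)" by (simp add: exp_minus field_simps)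
  qed
  have beta_sol: "\<And>s. s \<ge> 0 \<Longrightarrow> \<beta> s - 1 = (\<beta> 0 - 1) * exp (- s)"
  proof -
    have "\<exists>c. \<forall>s\<in>{0::real..}. (\<beta> s - 1) * exp s = c"
    proof (rule has_field_derivative_zero_constant)
      fix s :: real assume "s \<in> {0..}"
      then have "(\<beta> has_real_derivative (1 - \<beta> s)) (at s within {0..})" using beta_ode by auto
      then have "((\<lambda>s. (\<beta> s - 1) * exp s) has_real_derivative (1 - \<beta> s) * exp s + (\<beta> s - 1) * exp s) (at s within {0..})"
        by (auto intro!: derivative_eq_intros)
      then show "((\<lambda>s. (\<beta> s - 1) * exp s) has_real_derivative 0) (at s within {0..})" by (simp add: algebra_simps)
    qed simp
    then obtain c where c: "\<forall>s\<in>{0::real..}. (\<beta> s - 1) * exp s = c" by blast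
    fix s :: real assume "s \<ge> 0"
    then have "(\<beta> s - 1) * exp s = (\<beta> 0 - 1) * exp 0" using c[rule_format, of s] c[rule_format, of 0] by auto
    then show "\<beta> s - 1 = (\<beta> 0 - 1) * exp (- s)" by (simp add: exp_minus field_simps)
  qed
  have "continuous_on {0..L} (\<lambda>x. \<bar>X0 x - Th x\<bar>)"
    using C2_cont[OF X0_C2] Th_cont by (intro continuous_intros)
  then obtain xm where "xm \<in> {0..L}" and xm: "\<forall>y\<in>{0..L}. \<bar>X0 y - Th y\<bar> \<le> \<bar>X0 xm - Th xm\<bar>"
    using continuous_attains_sup[of "{0..L}" "\<lambda>x. \<bar>X0 x - Th x\<bar>"] L_pos by auto
  define M where "M = \<bar>X0 xm - Th xm\<bar>"
  define A where "A = \<bar>\<alpha> 0\<bar> + \<bar>\<beta> 0 - 1\<bar> + M + 1"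
  have M0: "M \<ge> 0" unfolding M_def by simp
  have Apos: "A > 0" and AM: "A \<ge> M" and Aa: "A \<ge> \<bar>\<alpha> 0\<bar>" and Ab: "A \<ge> \<bar>\<beta> 0 - 1\<bar>"
    unfolding A_def using M0 by auto
  define g where "g y = 2 - (Th y)\<^sup>2" for y
  have g_bd: "\<And>y. y \<in> {0..L} \<Longrightarrow> 1 \<le> g y \<and> g y \<le> 2"
  proof -
    fix y assume y: "y \<in> {0..L}"
    have "0 \<le> Th y" "Th y \<le> 1" using Th_ge[OF y] Th_le[OF y] by auto
    then have "(Th y)\<^sup>2 \<le> 1" "0 \<le> (Th y)\<^sup>2" by (auto simp: power_le_one)
    then show "1 \<le> g y \<and> g y \<le> 2" unfolding g_def by auto
  qed
  have exp_le: "\<And>s::real. s \<ge> 0 \<Longrightarrow> exp (- s) \<le> exp (- s / 2)" by simp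
  have key: "\<And>\<sigma>. \<bar>\<sigma>\<bar> = 1 \<Longrightarrow> \<forall>t\<in>{0..T}. \<forall>x\<in>{0..L}. \<sigma> * (X t x - Th x) - A * exp (- t / 2) * g x \<le> 0"
    if T: "T \<ge> 0" for T
  proof -
    fix \<sigma> :: real assume sig: "\<bar>\<sigma>\<bar> = 1"
    have sz: "\<And>z. \<sigma> * z \<le> \<bar>z\<bar>" using sig by (auto simp: abs_if split: if_splits)
    show "\<forall>t\<in>{0..T}. \<forall>x\<in>{0..L}. \<sigma> * (X t x - Th x) - A * exp (- t / 2) * g x \<le> 0"
    proof (rule maxp[where u = "\<lambda>t x. \<sigma> * (X t x - Th x) - A * exp (- t / 2) * g x"])
      have c1: "continuous_on ({0..T}\<times>{0..L}) (\<lambda>p. X (fst p) (snd p))"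
        proof -
        have "{0..T}\<times>{0..L} \<subseteq> {0..}\<times>{0..L}" by auto
        from continuous_on_subset[OF X_cont this] show ?thesis by (simp add: case_prod_beta)
      qed
      have c2: "continuous_on ({0..T}\<times>{0..L}) (\<lambda>p. Th (snd p))"
        by (rule continuous_on_compose2[OF Th_cont]) (auto intro: continuous_intros)
      have c3: "continuous_on ({0..T}\<times>{0..L}) (\<lambda>p. g (snd p))"
        unfolding g_def using c2 by (intro continuous_intros)
      show "continuous_on ({0..T}\<times>{0..L}) (\<lambda>p. \<sigma> * (X (fst p) (snd p) - Th (snd p)) - A * exp (- fst p / 2) * g (snd p))"
        using c1 c2 c3 by (intro continuous_intros) auto
    next
      show "T \<ge> 0" by fact
    next
      show "L \<ge> 0" using L_pos by simp
    next
      show "\<forall>x\<in>{0..L}. \<sigma> * (X 0 x - Th x) - A * exp (- 0 / 2) * g x \<le> 0"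
      proof
        fix x assume x: "x \<in> {0..L}"
        have "\<sigma> * (X 0 x - Th x) \<le> \<bar>X0 x - Th x\<bar>" using sz X_init x by simp
        also have "\<dots> \<le> M" using xm x M_def by simp
        also have "\<dots> \<le> A * g x" using AM g_bd[OF x] Apos
          by (metis mult.right_neutral mult_left_mono order_trans less_imp_le)
        finally show "\<sigma> * (X 0 x - Th x) - A * exp (- 0 / 2) * g x \<le> 0" by simp
      qed
    next
      show "\<forall>t\<in>{0..T}. \<sigma> * (X t 0 - Th 0) - A * exp (- t / 2) * g 0 \<le> 0"
      proof
        fix t assume t: "t \<in> {0..T}"
        have "\<sigma> * (X t 0 - Th 0) = \<sigma> * (\<alpha> 0 * exp (- t))" proof -
          have "t \<ge> 0" using t by simp
          then have "X t 0 = \<alpha> 0 * exp (- t)" using X_left alpha_sol[of t] by simp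
          then show ?thesis using Th0 by simp
        qed
        also have "\<dots> \<le> \<bar>\<alpha> 0\<bar> * exp (- t)" using sz[of "\<alpha> 0 * exp (- t)"] by (simp add: abs_mult)
        also have "\<dots> \<le> A * exp (- t / 2)" using Aa exp_le[of t] t
          by (intro mult_mono) auto
        finally have "\<sigma> * (X t 0 - Th 0) \<le> A * exp (- t / 2)" .
        moreover have "0 < A * exp (- t / 2)" using Apos by simp
        moreover have "g 0 = 2" by (simp add: g_def Th0)
        ultimately show "\<sigma> * (X t 0 - Th 0) - A * exp (- t / 2) * g 0 \<le> 0" by simp
      qed
    next
      show "\<forall>t\<in>{0..T}. \<sigma> * (X t L - Th L) - A * exp (- t / 2) * g L \<le> 0"
      proof
        fix t assume t: "t \<in> {0..T}"
        have "\<sigma> * (X t L - Th L) = \<sigma> * ((\<beta> 0 - 1) * exp (- t))" proof -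
          have "t \<ge> 0" using t by simp
          then have "X t L - 1 = (\<beta> 0 - 1) * exp (- t)" using X_right beta_sol[of t] by simp
          then show ?thesis using ThL by simp
        qed
        also have "\<dots> \<le> \<bar>\<beta> 0 - 1\<bar> * exp (- t)" using sz[of "(\<beta> 0 - 1) * exp (- t)"] by (simp add: abs_mult)
        also have "\<dots> \<le> A * exp (- t / 2)" using Ab exp_le[of t] t
          by (intro mult_mono) auto
        finally show "\<sigma> * (X t L - Th L) - A * exp (- t / 2) * g L \<le> 0"
          by (simp add: g_def ThL)
      qed
    next
      fix t x
      assume tp: "0 < t" and tT: "t \<le> T" and x0: "0 < x" and xL: "x < L"
        and maxy: "\<forall>y\<in>{0..L}. \<sigma> * (X t y - Th y) - A * exp (- t / 2) * g y
                      \<le> \<sigma> * (X t x - Th x) - A * exp (- t / 2) * g x"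
        and maxs: "\<forall>s\<in>{0..t}. \<sigma> * (X s x - Th x) - A * exp (- s / 2) * g x
                      \<le> \<sigma> * (X t x - Th x) - A * exp (- t / 2) * g x"
      show False
      proof -
        have xI: "x \<in> {0<..<L}" using x0 xL by simp
        have xc: "x \<in> {0..L}" using x0 xL by simp
        obtain f1 f2 where f1: "\<forall>y\<in>{0..L}. (X t has_real_derivative f1 y) (at y within {0..L})"
          and f2: "\<forall>y\<in>{0..L}. (f1 has_real_derivative f2 y) (at y within {0..L})"
        proof -
          have "C2_on {0..L} (X t)" using X_C2 tp by simp
          then show ?thesis using that unfolding C2_on_def by blast
        qed
        have atI: "\<And>y. y \<in> {0<..<L} \<Longrightarrow> at y within {0..L} = at y"
          by (intro at_within_interior) simp
        have f1d: "\<And>y. y \<in> {0<..<L} \<Longrightarrow> (X t has_real_derivative f1 y) (at y)"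
        proof -
          fix y assume y: "y \<in> {0<..<L}"
          then have "y \<in> {0..L}" by simp
          then have "(X t has_real_derivative f1 y) (at y within {0..L})" using f1 by blast
          then show "(X t has_real_derivative f1 y) (at y)" using atI[OF y] by simp
        qed
        have f2d: "(f1 has_real_derivative f2 x) (at x)"
        proof -
          have "(f1 has_real_derivative f2 x) (at x within {0..L})" using f2 xc by blast
          then show ?thesis using atI[OF xI] by simp
        qed
        have dX: "\<And>y. y \<in> {0<..<L} \<Longrightarrow> deriv (X t) y = f1 y" using f1d DERIV_imp_deriv by blast
        define q where "q y = deriv (X t) y / \<rho> y" for y
        define Q where "Q = (f2 x * \<rho> x - f1 x * \<rho>' x) / (\<rho> x * \<rho> x)"
        have rx: "\<rho> x > 0" using rpos xc by simp
        have qd: "(q has_real_derivative Q) (at x)"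
        proof -
          have "((\<lambda>y. f1 y / \<rho> y) has_real_derivative Q) (at x)"
            unfolding Q_def using rho_deriv xI rx by (intro DERIV_divide f2d) auto
          then show ?thesis
            by (rule has_field_derivative_transform_within_open[where S="{0<..<L}"]) (use xI in \<open>auto simp: q_def dX\<close>)
        qed
        have dq: "deriv q x = Q" using qd DERIV_imp_deriv by blast
        define c where "c = A * exp (- t / 2)"
        have cpos: "c > 0" unfolding c_def using Apos by simp
        define k where "k y = \<sigma> * (X t y - Th y) - c * g y" for y
        have kd: "\<And>y. y \<in> {0<..<L} \<Longrightarrow> (k has_real_derivative \<sigma> * (f1 y - \<rho> y) + 2 * c * Th y * \<rho> y) (at y)"
        proof -
          fix y assume y: "y \<in> {0<..<L}"
          show "(k has_real_derivative \<sigma> * (f1 y - \<rho> y) + 2 * c * Th y * \<rho> y) (at y)"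
            unfolding k_def[abs_def] g_def using f1d[OF y] Th_der[OF y]
            by (auto intro!: derivative_eq_intros simp: algebra_simps)
        qed
        have kmax: "\<And>y. y \<in> {0..L} \<Longrightarrow> k y \<le> k x" using maxy unfolding k_def c_def by auto
        have kx0: "\<sigma> * (f1 x - \<rho> x) + 2 * c * Th x * \<rho> x = 0"
        proof (rule DERIV_local_max[OF kd[OF xI]])
          show "0 < min x (L - x)" using x0 xL by simp
          show "\<forall>y. \<bar>x - y\<bar> < min x (L - x) \<longrightarrow> k y \<le> k x"
            using kmax by (auto simp: abs_if split: if_splits)
        qed
        define r where "r y = \<sigma> * (q y - 1) + 2 * c * Th y" for y
        have rd: "(r has_real_derivative \<sigma> * Q + 2 * c * \<rho> x) (at x)"
          unfolding r_def[abs_def] using qd Th_der[OF xI]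
          by (auto intro!: derivative_eq_intros simp: algebra_simps)
        have rk: "\<And>y. y \<in> {0<..<L} \<Longrightarrow> r y * \<rho> y = \<sigma> * (f1 y - \<rho> y) + 2 * c * Th y * \<rho> y"
        proof -
          fix y assume y: "y \<in> {0<..<L}"
          have "\<rho> y > 0" using rpos y by simp
          then show "r y * \<rho> y = \<sigma> * (f1 y - \<rho> y) + 2 * c * Th y * \<rho> y"
            using y by (simp add: r_def q_def dX field_simps)
        qed
        have r0: "r x = 0" using rk[OF xI] kx0 rx by simp
        have r_le: "\<sigma> * Q + 2 * c * \<rho> x \<le> 0"
        proof (rule ccontr)
          assume "\<not> \<sigma> * Q + 2 * c * \<rho> x \<le> 0"
          then have pos: "0 < \<sigma> * Q + 2 * c * \<rho> x" by simp
          obtain d' where d': "d' > 0" and inc: "\<forall>h>0. x + h \<in> UNIV \<longrightarrow> h < d' \<longrightarrow> r x < r (x + h)"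
            using has_real_derivative_pos_inc_right[OF rd pos] by blast
          define h where "h = min (d' / 2) ((L - x) / 2)"
          have h: "h > 0" "h < d'" "x + h < L" using d' xL unfolding h_def by (auto simp: min_def field_simps)
          have "k x < k (x + h)"
          proof (rule DERIV_pos_imp_increasing_open[of x "x + h" k])
            show "x < x + h" using h by simp
          next
            fix z assume z: "x < z" "z < x + h"
            have zI: "z \<in> {0<..<L}" using z x0 h by auto
            have "z - x > 0" "z - x < d'" using z h by auto
            then have "r x < r (x + (z - x))" using inc by blast
            then have "r z > 0" using r0 by simp
            moreover have "\<rho> z > 0" using rpos zI by simp
            ultimately have "r z * \<rho> z > 0" by simp
            then show "\<exists>y. (k has_real_derivative y) (at z) \<and> 0 < y"
              using kd[OF zI] rk[OF zI] by auto
          next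
            show "continuous_on {x..x + h} k"
            proof (rule has_real_derivative_imp_continuous_on)
              fix z assume "z \<in> {x..x + h}"
              then have "z \<in> {0<..<L}" using x0 h by auto
              then show "(k has_real_derivative (\<sigma> * (f1 z - \<rho> z) + 2 * c * Th z * \<rho> z)) (at z)"
                by (rule kd)
            qed
          qed
          moreover have "k (x + h) \<le> k x" using kmax h x0 by simp
          ultimately show False by simp
        qed
        define F where "F s = \<sigma> * (X s x - Th x) - A * exp (- s / 2) * g x" for s
        have pde: "((\<lambda>s. X s x) has_real_derivative (1 / \<rho> x) * deriv q x) (at t)"
          unfolding q_def[abs_def] using X_pde tp xI by auto
        have Fd: "(F has_real_derivative \<sigma> * ((1 / \<rho> x) * deriv q x) + c / 2 * g x) (at t)"
          unfolding F_def[abs_def] c_def using pde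
          by (auto intro!: derivative_eq_intros simp: algebra_simps)
        have Fnn: "\<sigma> * ((1 / \<rho> x) * deriv q x) + c / 2 * g x \<ge> 0"
        proof (rule ccontr)
          assume "\<not> ?thesis"
          then have neg: "\<sigma> * ((1 / \<rho> x) * deriv q x) + c / 2 * g x < 0" by simp
          obtain d' where d': "d' > 0" and dec: "\<forall>h>0. t - h \<in> UNIV \<longrightarrow> h < d' \<longrightarrow> F t < F (t - h)"
            using has_real_derivative_neg_dec_left[OF Fd neg] by blast
          define h where "h = min (d' / 2) t"
          have h: "h > 0" "h < d'" "h \<le> t" using d' tp unfolding h_def by auto
          have "F t < F (t - h)" using dec h by auto
          moreover have "F (t - h) \<le> F t"
          proof -
            have "t - h \<in> {0..t}" using h by simp
            then show ?thesis using maxs unfolding F_def by blast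
          qed
          ultimately show False by simp
        qed
        have "\<sigma> * Q / \<rho> x \<le> - 2 * c" using r_le rx by (simp add: pos_divide_le_eq)
        moreover have "\<sigma> * ((1 / \<rho> x) * deriv q x) = \<sigma> * Q / \<rho> x" using dq by simp
        moreover have "c / 2 * g x \<le> c" using g_bd[OF xc] cpos by simp
        ultimately show False using Fnn cpos by linarith
      qed
    qed
  qed
  have expl: "((\<lambda>t::real. exp (- t / 2)) \<longlongrightarrow> 0) at_top"
  proof -
    have "filterlim (\<lambda>t::real. 1/2 * t) at_top at_top"
      by (rule filterlim_tendsto_pos_mult_at_top[OF tendsto_const _ filterlim_ident]) simp
    then have "filterlim (\<lambda>t::real. -(1/2 * t)) at_bot at_top"
      by (simp only: filterlim_uminus_at_top[symmetric])
    then have "filterlim (\<lambda>t::real. -t/2) at_bot at_top" by simp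
    then show ?thesis by (rule filterlim_compose[OF exp_at_bot])
  qed
  show ?thesis
  proof
    fix x assume x: "x \<in> {0<..<L}"
    then have xc: "x \<in> {0..L}" by simp
    have bd: "\<bar>X t x - Th x\<bar> \<le> 2 * A * exp (- t / 2)" if t: "t \<ge> 0" for t
    proof -
      have tc: "t \<in> {0..t}" using t by simp
      have p: "1 * (X t x - Th x) - A * exp (- t / 2) * g x \<le> 0"
        using key[OF t, of 1] tc xc by simp
      have m: "(-1) * (X t x - Th x) - A * exp (- t / 2) * g x \<le> 0"
        using key[OF t, of "-1"] tc xc by simp
      have "A * exp (- t / 2) * g x \<le> A * exp (- t / 2) * 2"
        using g_bd[OF xc] Apos by (intro mult_left_mono) auto
      then show ?thesis using p m by (simp add: abs_le_iff)
    qed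
    have "((\<lambda>t. X t x - Th x) \<longlongrightarrow> 0) at_top"
    proof (rule Lim_null_comparison)
      show "\<forall>\<^sub>F t in at_top. norm (X t x - Th x) \<le> 2 * A * exp (- t / 2)"
        using eventually_ge_at_top[of "0::real"] by (rule eventually_mono) (use bd in simp)
      show "((\<lambda>t. 2 * A * exp (- t / 2)) \<longlongrightarrow> 0) at_top"
        using tendsto_mult[OF tendsto_const[of "2 * A"] expl] by simp
    qed
    from tendsto_add[OF this tendsto_const[of "Th x"]]
    show "((\<lambda>t. X t x) \<longlongrightarrow> Theta \<rho> x) at_top" by (simp add: Th_def)
  qed
qed
end
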